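(* Let $\tilde\rho:=1-(\epsilon^-/\epsilon^+)^2$. For every $n\ge1$ and every bounded measurable $\varphi$, for every $\mu'\in\mathcal{P}$, every $N\ge1$ and every realization of the $N$-particle system, \[ \left|\Big(\prod_{p=0}^{n-1}\lambda_p^N\Big)^{-1}\mu'Q^N_{0,n}(\varphi)-\mu'(h^N_{0,n})\,\eta_n^N(\varphi)\right|\le2\|\varphi\|\tilde\rho^n\frac{\epsilon^+}{\epsilon^-}, \] \[ \left|\frac{\mu'Q^N_{0,n}(\varphi)}{\mu'Q^N_{0,n}(1)}-\eta_n^N(\varphi)\right|\le2\|\varphi\|\tilde\rho^n\left(\frac{\epsilon^+}{\epsilon^-}\right)^2. \]
   Context: Setting: $(\mathsf{X},\mathcal{B})$ is a measurable space with countably generated $\sigma$-algebra; $\mathcal{P}$ the probability measures. For a measure $\mu$, kernel $K$, function $\varphi$: $\mu(\varphi)=\int\varphi\,d\mu$, $K(\varphi)(x)=\int K(x,dy)\varphi(y)$, $\mu K(\cdot)=\int\mu(dx)K(x,\cdot)$; $1$ is the constant function one; $\|\varphi\|=\sup_x|\varphi(x)|$. $G:\mathsf{X}\to(0,\infty)$ bounded measurable, $M$ a Markov kernel, $Q(x,dy):=G(x)M(x,dy)$. Assumption (H) (in force): there is a probability measure $\nu$ such that for all $x$, $Q(x,\cdot)$ is equivalent to $\nu$ with density $q(x,x')$ satisfying $\epsilon^-\le q\le\epsilon^+$ for constants $0<\epsilon^-,\epsilon^+<\infty$. For $\eta\in\mathcal{P}$, $\Phi(\eta):=\eta Q/\eta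 Q(1)$. Particle system: fix $N\ge1$ and $\mu\in\mathcal{P}$; $\zeta_0^1,\dots,\zeta_0^N$ i.i.d. $\mu$; for $n\ge1$, conditionally on the past, the $\zeta_n^i$ are i.i.d. with law $\Phi(\eta^N_{n-1})$, where $\eta_n^N:=\frac1N\sum_{i=1}^N\delta_{\zeta_n^i}$. Define $\lambda_n^N:=\eta_n^N(G)$, $Q_n^N(x,dx'):=\frac{dQ(x,\cdot)}{d\Phi(\eta_{n-1}^N)}(x')\,\eta_n^N(dx')$ for $n\ge1$, $Q^N_{n,n}:=Id$, $Q^N_{p,n}:=Q^N_{p+1}\cdots Q^N_n$ for $p<n$, and $h^N_{n,n}:=1$, $h_{p,n}^N(x):=\frac{Q^N_{p,n}(1)(x)}{\eta^N_pQ^N_{p,n}(1)}$ for $0\le p<n$. *)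

theory Defs
  imports "HOL-Probability.Probability"
begin

definition countably_generated :: "'a measure \<Rightarrow> bool" where
  "countably_generated X \<longleftrightarrow>
     (\<exists>C. countable C \<and> C \<subseteq> Pow (space X) \<and> sets X = sigma_sets (space X) C)"

definition supnorm :: "'a measure \<Rightarrow> ('a \<Rightarrow> real) \<Rightarrow> real" where
  "supnorm X f = (SUP x\<in>space X. \<bar>f x\<bar>)"

definition emp :: "nat \<Rightarrow> (nat \<Rightarrow> 'a) \<Rightarrow> ('a \<Rightarrow> real) \<Rightarrow> real" where
  "emp N z f = (\<Sum>i<N. f (z i)) / real N"

text \<open>The version of the Radon-Nikodym derivative dQ(x,.)/dPhi(eta)(x') determined by the
  density q, where eta is the empirical measure of z:
  Phi(eta)(dx') = eta(q(.,x')) / eta(G) nu(dx'), Q(x,dx') = q(x,x') nu(dx').\<close>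
definition dQdPhi :: "('a \<Rightarrow> real) \<Rightarrow> ('a \<Rightarrow> 'a \<Rightarrow> real) \<Rightarrow> nat \<Rightarrow> (nat \<Rightarrow> 'a) \<Rightarrow> 'a \<Rightarrow> 'a \<Rightarrow> real" where
  "dQdPhi G q N z x x' = q x x' * emp N z G / emp N z (\<lambda>w. q w x')"

text \<open>Q^N_n (n >= 1) acting on functions; zeta k i is the i-th particle at time k.\<close>
definition QN :: "('a \<Rightarrow> real) \<Rightarrow> ('a \<Rightarrow> 'a \<Rightarrow> real) \<Rightarrow> nat \<Rightarrow> (nat \<Rightarrow> nat \<Rightarrow> 'a) \<Rightarrow> nat
    \<Rightarrow> ('a \<Rightarrow> real) \<Rightarrow> 'a \<Rightarrow> real" where
  "QN G q N \<zeta> n f x = emp N (\<zeta> n) (\<lambda>x'. dQdPhi G q N (\<zeta> (n - 1)) x x' * f x')"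

text \<open>QNpk p k = Q^N_{p,p+k} = Q^N_{p+1} ... Q^N_{p+k}.\<close>
fun QNpk :: "('a \<Rightarrow> real) \<Rightarrow> ('a \<Rightarrow> 'a \<Rightarrow> real) \<Rightarrow> nat \<Rightarrow> (nat \<Rightarrow> nat \<Rightarrow> 'a) \<Rightarrow> nat \<Rightarrow> nat
    \<Rightarrow> ('a \<Rightarrow> real) \<Rightarrow> 'a \<Rightarrow> real" where
  "QNpk G q N \<zeta> p 0 f = f"
| "QNpk G q N \<zeta> p (Suc k) f = QN G q N \<zeta> (Suc p) (QNpk G q N \<zeta> (Suc p) k f)"

definition QNpn :: "('a \<Rightarrow> real) \<Rightarrow> ('a \<Rightarrow> 'a \<Rightarrow> real) \<Rightarrow> nat \<Rightarrow> (nat \<Rightarrow> nat \<Rightarrow> 'a) \<Rightarrow> nat \<Rightarrow> nat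
    \<Rightarrow> ('a \<Rightarrow> real) \<Rightarrow> 'a \<Rightarrow> real" where
  "QNpn G q N \<zeta> p n f = QNpk G q N \<zeta> p (n - p) f"

text \<open>h^N_{p,n}; for p = n this equals the constant 1 as in the paper.\<close>
definition hN :: "('a \<Rightarrow> real) \<Rightarrow> ('a \<Rightarrow> 'a \<Rightarrow> real) \<Rightarrow> nat \<Rightarrow> (nat \<Rightarrow> nat \<Rightarrow> 'a) \<Rightarrow> nat \<Rightarrow> nat
    \<Rightarrow> 'a \<Rightarrow> real" where
  "hN G q N \<zeta> p n x =
     (if n = p then 1
      else QNpn G q N \<zeta> p n (\<lambda>_. 1) x / emp N (\<zeta> p) (QNpn G q N \<zeta> p n (\<lambda>_. 1)))"

definition lambdaN :: "('a \<Rightarrow> real) \<Rightarrow> nat \<Rightarrow> (nat \<Rightarrow> nat \<Rightarrow> 'a) \<Rightarrow> nat \<Rightarrow> real" where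
  "lambdaN G N \<zeta> p = emp N (\<zeta> p) G"

end

theory Submission imports Defs begin


lemma avg_bound:
  fixes w r :: "'i \<Rightarrow> real"
  assumes "finite I" "I \<noteq> {}" "\<forall>i\<in>I. w i > 0" "\<forall>i\<in>I. \<bar>c - r i\<bar> \<le> B"
  shows "\<bar>c - (\<Sum>i\<in>I. w i * r i) / (\<Sum>i\<in>I. w i)\<bar> \<le> B"
proof -
  have pos: "(\<Sum>i\<in>I. w i) > 0" using assms by (intro sum_pos) auto
  have "c - (\<Sum>i\<in>I. w i * r i) / (\<Sum>i\<in>I. w i) = (\<Sum>i\<in>I. w i * (c - r i)) / (\<Sum>i\<in>I. w i)"
    using pos by (simp add: field_simps sum_distrib_left sum_subtractf sum_distrib_right)
  moreover have "\<bar>\<Sum>i\<in>I. w i * (c - r i)\<bar> \<le> (\<Sum>i\<in>I. w i * B)"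
  proof -
    have "\<bar>\<Sum>i\<in>I. w i * (c - r i)\<bar> \<le> (\<Sum>i\<in>I. \<bar>w i * (c - r i)\<bar>)" by (rule sum_abs)
    also have "\<dots> \<le> (\<Sum>i\<in>I. w i * B)"
      using assms by (intro sum_mono) (auto simp: abs_mult intro: mult_left_mono)
    finally show ?thesis .
  qed
  moreover have "(\<Sum>i\<in>I. w i * B) = B * (\<Sum>i\<in>I. w i)" by (simp add: sum_distrib_left mult.commute)
  ultimately show ?thesis using pos by (simp add: abs_divide divide_le_eq)
qed

lemma prob_contr:
  fixes \<alpha> \<beta> u :: "'i \<Rightarrow> real"
  assumes fin: "finite I" and sa: "sum \<alpha> I = 1" and sb: "sum \<beta> I = 1"
    and bpos: "\<forall>j\<in>I. \<beta> j \<ge> 0" and t0: "0 \<le> t" and t1: "t \<le> 1"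
    and ab: "\<forall>j\<in>I. t * \<beta> j \<le> \<alpha> j"
    and osc: "\<forall>i\<in>I. \<forall>j\<in>I. \<bar>u i - u j\<bar> \<le> D"
  shows "\<bar>\<Sum>j\<in>I. (\<alpha> j - \<beta> j) * u j\<bar> \<le> (1 - t) * D"
proof -
  have ne: "I \<noteq> {}" using sb by auto
  define m where "m = Min (u ` I)"
  have mle: "\<forall>j\<in>I. m \<le> u j" using fin by (auto simp: m_def)
  have "m \<in> u ` I" unfolding m_def using fin ne by (intro Min_in) auto
  then obtain j0 where j0: "j0 \<in> I" "u j0 = m" by auto
  have ud: "\<forall>j\<in>I. u j - m \<le> D" using osc j0 by (metis abs_le_D1)
  have "(\<Sum>j\<in>I. (\<alpha> j - \<beta> j) * u j) = (\<Sum>j\<in>I. (\<alpha> j - \<beta> j) * (u j - m))"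
  proof -
    have "(\<Sum>j\<in>I. (\<alpha> j - \<beta> j) * (u j - m)) = (\<Sum>j\<in>I. (\<alpha> j - \<beta> j) * u j) - m * (\<Sum>j\<in>I. (\<alpha> j - \<beta> j))"
    proof -
      have "(\<Sum>j\<in>I. (\<alpha> j - \<beta> j) * (u j - m)) = (\<Sum>j\<in>I. (\<alpha> j - \<beta> j) * u j - m * (\<alpha> j - \<beta> j))"
        by (intro sum.cong) (auto simp: algebra_simps)
      also have "\<dots> = (\<Sum>j\<in>I. (\<alpha> j - \<beta> j) * u j) - m * (\<Sum>j\<in>I. (\<alpha> j - \<beta> j))"
        by (simp add: sum_subtractf sum_distrib_left[symmetric])
      finally show ?thesis .
    qed
    moreover have "(\<Sum>j\<in>I. (\<alpha> j - \<beta> j)) = 0" using sa sb by (simp add: sum_subtractf)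
    ultimately show ?thesis by simp
  qed
  also have "\<dots> = (\<Sum>j\<in>I. (\<alpha> j - t * \<beta> j) * (u j - m)) - (1 - t) * (\<Sum>j\<in>I. \<beta> j * (u j - m))"
    by (simp add: algebra_simps sum_subtractf sum_distrib_left sum.distrib)
  finally have eq: "(\<Sum>j\<in>I. (\<alpha> j - \<beta> j) * u j) = (\<Sum>j\<in>I. (\<alpha> j - t * \<beta> j) * (u j - m)) - (1 - t) * (\<Sum>j\<in>I. \<beta> j * (u j - m))" .
  have A0: "0 \<le> (\<Sum>j\<in>I. (\<alpha> j - t * \<beta> j) * (u j - m))"
    using ab mle by (intro sum_nonneg) auto
  have "(\<Sum>j\<in>I. (\<alpha> j - t * \<beta> j) * (u j - m)) \<le> (\<Sum>j\<in>I. (\<alpha> j - t * \<beta> j) * D)"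
    using ab ud by (intro sum_mono mult_left_mono) auto
  also have "\<dots> = (\<Sum>j\<in>I. (\<alpha> j - t * \<beta> j)) * D" by (simp add: sum_distrib_right)
  also have "\<dots> = (1 - t) * D" using sa sb by (simp add: sum_subtractf sum_distrib_left[symmetric])
  finally have A1: "(\<Sum>j\<in>I. (\<alpha> j - t * \<beta> j) * (u j - m)) \<le> (1 - t) * D" .
  have B0: "0 \<le> (\<Sum>j\<in>I. \<beta> j * (u j - m))" using bpos mle by (intro sum_nonneg) auto
  have "(\<Sum>j\<in>I. \<beta> j * (u j - m)) \<le> (\<Sum>j\<in>I. \<beta> j * D)"
    using bpos ud by (intro sum_mono mult_left_mono) auto
  also have "\<dots> = D" using sb by (simp add: sum_distrib_right[symmetric])
  finally have B1: "(\<Sum>j\<in>I. \<beta> j * (u j - m)) \<le> D" .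
  have "0 \<le> (1 - t) * (\<Sum>j\<in>I. \<beta> j * (u j - m))" using t1 B0 by simp
  moreover have "(1 - t) * (\<Sum>j\<in>I. \<beta> j * (u j - m)) \<le> (1 - t) * D" using t1 B1 by (intro mult_left_mono) auto
  ultimately show ?thesis unfolding eq using A0 A1 by linarith
qed

lemma contr:
  fixes a b u :: "'i \<Rightarrow> real"
  assumes fin: "finite I" and ne: "I \<noteq> {}" and pos: "\<forall>j\<in>I. a j > 0 \<and> b j > 0"
    and s0: "0 \<le> s" and s1: "s \<le> 1"
    and ab: "\<forall>j\<in>I. s * b j \<le> a j" and ba: "\<forall>j\<in>I. s * a j \<le> b j"
    and osc: "\<forall>i\<in>I. \<forall>j\<in>I. \<bar>u i - u j\<bar> \<le> D"
  shows "\<bar>(\<Sum>j\<in>I. a j * u j) / (\<Sum>j\<in>I. a j) - (\<Sum>j\<in>I. b j * u j) / (\<Sum>j\<in>I. b j)\<bar> \<le> (1 - s\<^sup>2) * D"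
proof -
  define A where "A = (\<Sum>j\<in>I. a j)"
  define B where "B = (\<Sum>j\<in>I. b j)"
  have A: "A > 0" unfolding A_def using fin ne pos by (intro sum_pos) auto
  have B: "B > 0" unfolding B_def using fin ne pos by (intro sum_pos) auto
  have BA: "s * A \<le> B" unfolding A_def B_def using ba by (simp add: sum_distrib_left sum_mono)
  have sa: "(\<Sum>j\<in>I. a j / A) = 1" using A by (simp add: sum_divide_distrib[symmetric] A_def)
  have sb: "(\<Sum>j\<in>I. b j / B) = 1" using B by (simp add: sum_divide_distrib[symmetric] B_def)
  have key: "\<forall>j\<in>I. s\<^sup>2 * (b j / B) \<le> a j / A"
  proof
    fix j assume j: "j \<in> I"
    have "s * b j * (s * A) \<le> a j * B"
      using ab j BA pos s0 A by (intro mult_mono) auto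
    then show "s\<^sup>2 * (b j / B) \<le> a j / A" using A B
      by (simp add: field_simps power2_eq_square)
  qed
  have "\<bar>\<Sum>j\<in>I. (a j / A - b j / B) * u j\<bar> \<le> (1 - s\<^sup>2) * D"
    by (rule prob_contr[OF fin sa sb _ _ _ key osc]) (use pos B s1 s0 in \<open>auto simp: power_le_one\<close>)
  moreover have "(\<Sum>j\<in>I. (a j / A - b j / B) * u j) = (\<Sum>j\<in>I. a j * u j) / A - (\<Sum>j\<in>I. b j * u j) / B"
    by (simp add: left_diff_distrib sum_subtractf sum_divide_distrib)
  ultimately show ?thesis by (simp add: A_def B_def)
qed


lemma emp_pos: "N \<ge> 1 \<Longrightarrow> (\<forall>i<N. f (z i) > 0) \<Longrightarrow> emp N z f > 0"
  unfolding emp_def by (intro divide_pos_pos sum_pos) (auto simp: lessThan_empty_iff)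

lemma emp_one: "N \<ge> 1 \<Longrightarrow> emp N z (\<lambda>_. 1) = 1"
  unfolding emp_def by simp

lemma QN_expand:
  "QN G q N \<zeta> (Suc p) f x = (\<Sum>j<N. dQdPhi G q N (\<zeta> p) x (\<zeta> (Suc p) j) * f (\<zeta> (Suc p) j)) / real N"
  unfolding QN_def emp_def by simp

locale setting =
  fixes X :: "'a measure" and G :: "'a \<Rightarrow> real" and q :: "'a \<Rightarrow> 'a \<Rightarrow> real"
    and em ep :: real and N :: nat and \<zeta> :: "nat \<Rightarrow> nat \<Rightarrow> 'a"
  assumes N: "N \<ge> 1" and zs: "\<forall>k. \<forall>i<N. \<zeta> k i \<in> space X"
    and qb: "\<forall>x\<in>space X. \<forall>y\<in>space X. em \<le> q x y \<and> q x y \<le> ep"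
    and em: "0 < em" and Gp: "\<forall>x\<in>space X. 0 < G x"
begin

lemma zsp: "i < N \<Longrightarrow> \<zeta> k i \<in> space X" using zs by auto

lemma emep: "em \<le> ep" using qb zsp[of 0 0] N by force

lemma lam_pos: "emp N (\<zeta> p) G > 0" using Gp zsp N by (intro emp_pos) auto

lemma E_pos: "y \<in> space X \<Longrightarrow> emp N (\<zeta> p) (\<lambda>w. q w y) > 0"
  using qb zsp N em by (intro emp_pos) (auto intro: less_le_trans)

lemma dQ_pos: "x \<in> space X \<Longrightarrow> y \<in> space X \<Longrightarrow> dQdPhi G q N (\<zeta> p) x y > 0"
  unfolding dQdPhi_def using qb em lam_pos E_pos
  by (intro divide_pos_pos mult_pos_pos) (auto intro: less_le_trans)

lemma dQ_ratio: "x \<in> space X \<Longrightarrow> x2 \<in> space X \<Longrightarrow> y \<in> space X \<Longrightarrow>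
   (em / ep) * dQdPhi G q N (\<zeta> p) x2 y \<le> dQdPhi G q N (\<zeta> p) x y"
proof -
  assume x: "x \<in> space X" and x2: "x2 \<in> space X" and y: "y \<in> space X"
  define c where "c = emp N (\<zeta> p) G / emp N (\<zeta> p) (\<lambda>w. q w y)"
  have c: "c > 0" unfolding c_def using lam_pos E_pos[OF y] by simp
  have ep: "ep > 0" using em emep by linarith
  have "(em / ep) * q x2 y \<le> em"
    using qb x2 y ep em by (auto simp: field_simps intro: mult_left_mono)
  also have "\<dots> \<le> q x y" using qb x y by auto
  finally have "(em / ep) * q x2 y * c \<le> q x y * c" using c by (intro mult_right_mono) auto
  then show ?thesis unfolding dQdPhi_def c_def by (simp add: mult.assoc)
qed

lemma Q1_pos: "x \<in> space X \<Longrightarrow> QNpk G q N \<zeta> p k (\<lambda>_. 1) x > 0"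
proof (induction k arbitrary: p x)
  case 0 then show ?case by simp
next
  case (Suc k)
  show ?case unfolding QNpk.simps QN_expand using N Suc zsp dQ_pos
    by (intro divide_pos_pos sum_pos mult_pos_pos) (auto simp: lessThan_empty_iff)
qed

lemma QN_ratio:
  assumes x: "x \<in> space X" and x2: "x2 \<in> space X" and g: "\<forall>j<N. g (\<zeta> (Suc p) j) \<ge> 0"
  shows "(em / ep) * QN G q N \<zeta> (Suc p) g x2 \<le> QN G q N \<zeta> (Suc p) g x"
proof -
  have "(em / ep) * (\<Sum>j<N. dQdPhi G q N (\<zeta> p) x2 (\<zeta> (Suc p) j) * g (\<zeta> (Suc p) j))
      = (\<Sum>j<N. ((em / ep) * dQdPhi G q N (\<zeta> p) x2 (\<zeta> (Suc p) j)) * g (\<zeta> (Suc p) j))"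
    by (simp add: sum_distrib_left mult.assoc)
  also have "\<dots> \<le> (\<Sum>j<N. dQdPhi G q N (\<zeta> p) x (\<zeta> (Suc p) j) * g (\<zeta> (Suc p) j))"
    using g dQ_ratio[OF x x2] zsp by (intro sum_mono mult_right_mono) auto
  finally have *: "(em / ep) * (\<Sum>j<N. dQdPhi G q N (\<zeta> p) x2 (\<zeta> (Suc p) j) * g (\<zeta> (Suc p) j))
      \<le> (\<Sum>j<N. dQdPhi G q N (\<zeta> p) x (\<zeta> (Suc p) j) * g (\<zeta> (Suc p) j))" .
  show ?thesis unfolding QN_expand times_divide_eq_right by (rule divide_right_mono[OF *]) simp
qed

lemma cancel: "emp N (\<zeta> p) (QN G q N \<zeta> (Suc p) g) = emp N (\<zeta> p) G * emp N (\<zeta> (Suc p)) g"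
proof -
  define L where "L = emp N (\<zeta> p) G"
  define E where "E = (\<lambda>j. emp N (\<zeta> p) (\<lambda>w. q w (\<zeta> (Suc p) j)))"
  have Ep: "j < N \<Longrightarrow> E j > 0" for j unfolding E_def using E_pos zsp by auto
  have "emp N (\<zeta> p) (QN G q N \<zeta> (Suc p) g)
      = (\<Sum>i<N. (\<Sum>j<N. q (\<zeta> p i) (\<zeta> (Suc p) j) * (L / E j * g (\<zeta> (Suc p) j))) / real N) / real N"
    unfolding emp_def QN_expand dQdPhi_def L_def E_def
    by (auto intro!: arg_cong[where f="\<lambda>t. t / real N"] sum.cong)
  also have "\<dots> = (\<Sum>j<N. (\<Sum>i<N. q (\<zeta> p i) (\<zeta> (Suc p) j) * (L / E j * g (\<zeta> (Suc p) j))) / real N) / real N"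
    by (simp add: sum_divide_distrib) (rule sum.swap)
  also have "\<dots> = (\<Sum>j<N. E j * (L / E j * g (\<zeta> (Suc p) j))) / real N"
  proof (intro arg_cong[where f="\<lambda>t. t / real N"] sum.cong refl)
    fix j
    have "E j = (\<Sum>i<N. q (\<zeta> p i) (\<zeta> (Suc p) j)) / real N" by (simp add: E_def emp_def)
    then show "(\<Sum>i<N. q (\<zeta> p i) (\<zeta> (Suc p) j) * (L / E j * g (\<zeta> (Suc p) j))) / real N = E j * (L / E j * g (\<zeta> (Suc p) j))"
      by (simp only: sum_distrib_right[symmetric]) simp
  qed
  also have "\<dots> = (\<Sum>j<N. L * g (\<zeta> (Suc p) j)) / real N"
    using Ep by (intro arg_cong[where f="\<lambda>t. t / real N"] sum.cong) (auto dest!: Ep)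
  also have "\<dots> = L * emp N (\<zeta> (Suc p)) g"
    by (simp add: emp_def sum_distrib_left)
  finally show ?thesis by (simp add: L_def)
qed

lemma mass: "emp N (\<zeta> p) (QNpk G q N \<zeta> p k f) = (\<Prod>i<k. emp N (\<zeta> (p + i)) G) * emp N (\<zeta> (p + k)) f"
proof (induction k arbitrary: p)
  case 0 then show ?case by simp
next
  case (Suc k)
  have "emp N (\<zeta> p) (QNpk G q N \<zeta> p (Suc k) f) = emp N (\<zeta> p) G * emp N (\<zeta> (Suc p)) (QNpk G q N \<zeta> (Suc p) k f)"
    by (simp add: cancel)
  also have "\<dots> = emp N (\<zeta> p) G * ((\<Prod>i<k. emp N (\<zeta> (Suc p + i)) G) * emp N (\<zeta> (Suc p + k)) f)"
    by (simp add: Suc.IH)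
  also have "\<dots> = (\<Prod>i<Suc k. emp N (\<zeta> (p + i)) G) * emp N (\<zeta> (p + Suc k)) f"
    by (subst prod.lessThan_Suc_shift) simp
  finally show ?case .
qed

lemma contraction:
  assumes phib: "\<forall>x\<in>space X. \<bar>\<phi> x\<bar> \<le> \<Phi>"
  shows "x \<in> space X \<Longrightarrow> x2 \<in> space X \<Longrightarrow>
    \<bar>QNpk G q N \<zeta> p k \<phi> x / QNpk G q N \<zeta> p k (\<lambda>_. 1) x
     - QNpk G q N \<zeta> p k \<phi> x2 / QNpk G q N \<zeta> p k (\<lambda>_. 1) x2\<bar> \<le> 2 * \<Phi> * (1 - (em / ep)\<^sup>2) ^ k"
proof (induction k arbitrary: p x x2)
  case 0
  then show ?case using phib by (simp, smt (verit))
next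
  case (Suc k)
  define y where "y = \<zeta> (Suc p)"
  define g where "g = QNpk G q N \<zeta> (Suc p) k (\<lambda>_. 1)"
  define h where "h = QNpk G q N \<zeta> (Suc p) k \<phi>"
  define u where "u = (\<lambda>j. h (y j) / g (y j))"
  define a where "a = (\<lambda>j. dQdPhi G q N (\<zeta> p) x (y j) * g (y j))"
  define b where "b = (\<lambda>j. dQdPhi G q N (\<zeta> p) x2 (y j) * g (y j))"
  have ysp: "j < N \<Longrightarrow> y j \<in> space X" for j using zsp by (simp add: y_def)
  have gp: "j < N \<Longrightarrow> g (y j) > 0" for j unfolding g_def using Q1_pos ysp by auto
  have Nn: "real N > 0" using N by simp
  have ep: "ep > 0" using em emep by linarith
  have eq: "QNpk G q N \<zeta> p (Suc k) \<phi> z / QNpk G q N \<zeta> p (Suc k) (\<lambda>_. 1) z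
     = (\<Sum>j<N. dQdPhi G q N (\<zeta> p) z (y j) * g (y j) * u j) / (\<Sum>j<N. dQdPhi G q N (\<zeta> p) z (y j) * g (y j))" for z
  proof -
    have "(\<Sum>j<N. dQdPhi G q N (\<zeta> p) z (y j) * h (y j)) = (\<Sum>j<N. dQdPhi G q N (\<zeta> p) z (y j) * g (y j) * u j)"
      using gp by (intro sum.cong) (auto simp: u_def dest!: gp)
    then show ?thesis unfolding QNpk.simps QN_expand using Nn
      by (simp add: g_def[symmetric] h_def[symmetric] y_def[symmetric])
  qed
  have "\<bar>(\<Sum>j\<in>{..<N}. a j * u j) / (\<Sum>j\<in>{..<N}. a j) - (\<Sum>j\<in>{..<N}. b j * u j) / (\<Sum>j\<in>{..<N}. b j)\<bar>
     \<le> (1 - (em / ep)\<^sup>2) * (2 * \<Phi> * (1 - (em / ep)\<^sup>2) ^ k)"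
  proof (rule contr)
    show "finite {..<N}" by simp
    show "{..<N} \<noteq> {}" using N by (auto simp: lessThan_empty_iff)
    show "\<forall>j\<in>{..<N}. 0 < a j \<and> 0 < b j" unfolding a_def b_def
      using gp dQ_pos Suc.prems ysp by auto
    show "0 \<le> em / ep" using em ep by simp
    show "em / ep \<le> 1" using em ep emep by simp
    show "\<forall>j\<in>{..<N}. em / ep * b j \<le> a j"
    proof
      fix j assume "j \<in> {..<N}"
      then have j: "j < N" by simp
      have "em / ep * dQdPhi G q N (\<zeta> p) x2 (y j) \<le> dQdPhi G q N (\<zeta> p) x (y j)"
        using dQ_ratio Suc.prems ysp[OF j] by auto
      then have "em / ep * dQdPhi G q N (\<zeta> p) x2 (y j) * g (y j) \<le> dQdPhi G q N (\<zeta> p) x (y j) * g (y j)"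
        using gp[OF j] by (intro mult_right_mono) auto
      then show "em / ep * b j \<le> a j" unfolding a_def b_def by (simp add: mult.assoc)
    qed
    show "\<forall>j\<in>{..<N}. em / ep * a j \<le> b j"
    proof
      fix j assume "j \<in> {..<N}"
      then have j: "j < N" by simp
      have "em / ep * dQdPhi G q N (\<zeta> p) x (y j) \<le> dQdPhi G q N (\<zeta> p) x2 (y j)"
        using dQ_ratio Suc.prems ysp[OF j] by auto
      then have "em / ep * dQdPhi G q N (\<zeta> p) x (y j) * g (y j) \<le> dQdPhi G q N (\<zeta> p) x2 (y j) * g (y j)"
        using gp[OF j] by (intro mult_right_mono) auto
      then show "em / ep * a j \<le> b j" unfolding a_def b_def by (simp add: mult.assoc)
    qed
    show "\<forall>i\<in>{..<N}. \<forall>j\<in>{..<N}. \<bar>u i - u j\<bar> \<le> 2 * \<Phi> * (1 - (em / ep)\<^sup>2) ^ k"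
      unfolding u_def g_def h_def using Suc.IH ysp by auto
  qed
  then show ?case unfolding eq a_def b_def by (simp add: mult.commute mult.left_commute)
qed

lemma QN_integrable:
  assumes qm: "(\<lambda>(x, y). q x y) \<in> borel_measurable (X \<Otimes>\<^sub>M X)" and mu: "prob_space \<mu>'"
    and ms: "sets \<mu>' = sets X"
  shows "integrable \<mu>' (QN G q N \<zeta> (Suc p) g)"
proof -
  interpret mu: prob_space \<mu>' by fact
  have sp: "space \<mu>' = space X" using ms sets_eq_imp_space_eq by blast
  have qx: "y \<in> space X \<Longrightarrow> (\<lambda>x. q x y) \<in> borel_measurable X" for y
    using measurable_comp[OF measurable_Pair2'[of y X X] qm] by (simp add: o_def)
  define E where "E = (\<lambda>j. emp N (\<zeta> p) (\<lambda>w. q w (\<zeta> (Suc p) j)))"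
  define L where "L = emp N (\<zeta> p) G"
  have Ep: "j < N \<Longrightarrow> E j > 0" for j unfolding E_def using E_pos zsp by auto
  have Lp: "L > 0" unfolding L_def using lam_pos by simp
  have feq: "QN G q N \<zeta> (Suc p) g = (\<lambda>x. (\<Sum>j<N. q x (\<zeta> (Suc p) j) * L / E j * g (\<zeta> (Suc p) j)) / real N)"
    by (rule ext) (simp add: QN_expand dQdPhi_def L_def E_def)
  have meas: "QN G q N \<zeta> (Suc p) g \<in> borel_measurable X"
    unfolding feq using qx zsp
    by (intro borel_measurable_divide borel_measurable_sum borel_measurable_times borel_measurable_const) auto
  have bnd: "\<bar>QN G q N \<zeta> (Suc p) g x\<bar> \<le> (\<Sum>j<N. ep * L / E j * \<bar>g (\<zeta> (Suc p) j)\<bar>) / real N"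
    if x: "x \<in> space X" for x
  proof -
    have "\<bar>\<Sum>j<N. q x (\<zeta> (Suc p) j) * L / E j * g (\<zeta> (Suc p) j)\<bar> \<le> (\<Sum>j<N. \<bar>q x (\<zeta> (Suc p) j) * L / E j * g (\<zeta> (Suc p) j)\<bar>)"
      by (rule sum_abs)
    also have "\<dots> \<le> (\<Sum>j<N. ep * L / E j * \<bar>g (\<zeta> (Suc p) j)\<bar>)"
    proof (rule sum_mono)
      fix j assume "j \<in> {..<N}"
      then have j: "j < N" by simp
      have q: "0 \<le> q x (\<zeta> (Suc p) j)" "q x (\<zeta> (Suc p) j) \<le> ep" using qb x zsp[OF j] em by (auto intro: order.trans[of 0 em])
      have "\<bar>q x (\<zeta> (Suc p) j) * L / E j * g (\<zeta> (Suc p) j)\<bar> = q x (\<zeta> (Suc p) j) * (L / E j) * \<bar>g (\<zeta> (Suc p) j)\<bar>"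
        using q Lp Ep[OF j] by (simp add: abs_mult)
      also have "\<dots> \<le> ep * (L / E j) * \<bar>g (\<zeta> (Suc p) j)\<bar>"
        using q Lp Ep[OF j] by (intro mult_right_mono) auto
      finally show "\<bar>q x (\<zeta> (Suc p) j) * L / E j * g (\<zeta> (Suc p) j)\<bar> \<le> ep * L / E j * \<bar>g (\<zeta> (Suc p) j)\<bar>" by simp
    qed
    finally show ?thesis unfolding feq using N by (simp add: divide_right_mono)
  qed
  show ?thesis
    by (rule mu.integrable_const_bound[where B="(\<Sum>j<N. ep * L / E j * \<bar>g (\<zeta> (Suc p) j)\<bar>) / real N"])
       (use bnd sp meas measurable_cong_sets[OF ms refl] in auto)
qed

end


theorem theorem2:
  fixes X :: "'a measure" and G :: "'a \<Rightarrow> real" and M :: "'a \<Rightarrow> 'a measure"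
    and \<nu> :: "'a measure" and q :: "'a \<Rightarrow> 'a \<Rightarrow> real" and em ep :: real
    and n N :: nat and \<phi> :: "'a \<Rightarrow> real" and \<mu>' :: "'a measure"
    and \<zeta> :: "nat \<Rightarrow> nat \<Rightarrow> 'a"
  assumes cg: "countably_generated X"
    and G_meas: "G \<in> borel_measurable X"
    and G_pos: "\<forall>x\<in>space X. 0 < G x"
    and G_bdd: "\<exists>B. \<forall>x\<in>space X. G x \<le> B"
    and M_kernel: "M \<in> measurable X (subprob_algebra X)"
    and M_prob: "\<forall>x\<in>space X. prob_space (M x)"
    and nu_prob: "prob_space \<nu>" and nu_sets: "sets \<nu> = sets X"
    and em_pos: "0 < em" and ep_pos: "0 < ep"
    and q_meas: "(\<lambda>(x, y). q x y) \<in> borel_measurable (X \<Otimes>\<^sub>M X)"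
    and q_bounds: "\<forall>x\<in>space X. \<forall>y\<in>space X. em \<le> q x y \<and> q x y \<le> ep"
    and q_density: "\<forall>x\<in>space X. \<forall>A\<in>sets X. G x * measure (M x) A = (LINT y:A|\<nu>. q x y)"
    and n_ge: "n \<ge> 1"
    and phi_meas: "\<phi> \<in> borel_measurable X"
    and phi_bdd: "\<exists>B. \<forall>x\<in>space X. \<bar>\<phi> x\<bar> \<le> B"
    and mu_prob: "prob_space \<mu>'" and mu_sets: "sets \<mu>' = sets X"
    and N_ge: "N \<ge> 1"
    and zeta_space: "\<forall>k. \<forall>i<N. \<zeta> k i \<in> space X"
  shows "\<bar>inverse (\<Prod>p<n. lambdaN G N \<zeta> p) * (\<integral>x. QNpn G q N \<zeta> 0 n \<phi> x \<partial>\<mu>')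
            - (\<integral>x. hN G q N \<zeta> 0 n x \<partial>\<mu>') * emp N (\<zeta> n) \<phi>\<bar>
          \<le> 2 * supnorm X \<phi> * (1 - (em / ep)\<^sup>2) ^ n * (ep / em)
       \<and> \<bar>(\<integral>x. QNpn G q N \<zeta> 0 n \<phi> x \<partial>\<mu>') / (\<integral>x. QNpn G q N \<zeta> 0 n (\<lambda>_. 1) x \<partial>\<mu>')
            - emp N (\<zeta> n) \<phi>\<bar>
          \<le> 2 * supnorm X \<phi> * (1 - (em / ep)\<^sup>2) ^ n * (ep / em)\<^sup>2"
proof -
  interpret setting X G q em ep N \<zeta>
    by unfold_locales (use N_ge zeta_space q_bounds em_pos G_pos in auto)
  interpret mu: prob_space \<mu>' by (rule mu_prob)
  obtain n' where n: "n = Suc n'" using n_ge by (cases n) auto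
  define L where "L = (\<Prod>p<n. lambdaN G N \<zeta> p)"
  define T where "T = QNpk G q N \<zeta> 0 n \<phi>"
  define S where "S = QNpk G q N \<zeta> 0 n (\<lambda>_. 1)"
  define c where "c = emp N (\<zeta> n) \<phi>"
  define \<rho> where "\<rho> = 1 - (em / ep)\<^sup>2"
  define \<Phi> where "\<Phi> = supnorm X \<phi>"
  define B where "B = 2 * \<Phi> * \<rho> ^ n"
  have sp: "space \<mu>' = space X" using mu_sets sets_eq_imp_space_eq by blast
  have ep: "ep > 0" using em_pos emep by linarith
  have Nn: "real N > 0" using N_ge by simp
  have phib: "\<forall>x\<in>space X. \<bar>\<phi> x\<bar> \<le> \<Phi>"
  proof
    fix x assume x: "x \<in> space X"
    obtain Bp where Bp: "\<forall>x\<in>space X. \<bar>\<phi> x\<bar> \<le> Bp" using phi_bdd by auto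
    have "bdd_above ((\<lambda>x. \<bar>\<phi> x\<bar>) ` space X)" using Bp by (auto intro: bdd_aboveI2)
    then show "\<bar>\<phi> x\<bar> \<le> \<Phi>" unfolding \<Phi>_def supnorm_def using x by (rule cSUP_upper2) auto
  qed
  have \<Phi>0: "0 \<le> \<Phi>" using phib zsp[of 0 0] N_ge by force
  have \<rho>0: "0 \<le> \<rho>" unfolding \<rho>_def using em_pos ep emep by (simp add: power_le_one)
  have B0: "0 \<le> B" unfolding B_def using \<Phi>0 \<rho>0 by simp
  have Lp: "L > 0" unfolding L_def lambdaN_def using lam_pos by (intro prod_pos) auto
  have SL: "emp N (\<zeta> 0) S = L" unfolding S_def L_def lambdaN_def using mass[of 0 n "\<lambda>_. 1"] N_ge by (simp add: emp_def)
  have TL: "emp N (\<zeta> 0) T = L * c" unfolding T_def L_def lambdaN_def c_def using mass[of 0 n \<phi>] by simp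
  have Spos: "x \<in> space X \<Longrightarrow> S x > 0" for x unfolding S_def by (rule Q1_pos)
  have ctr: "x \<in> space X \<Longrightarrow> x2 \<in> space X \<Longrightarrow> \<bar>T x / S x - T x2 / S x2\<bar> \<le> B" for x x2
    unfolding T_def S_def B_def \<rho>_def by (rule contraction[OF phib])
  have rc: "\<bar>T x / S x - c\<bar> \<le> B" if x: "x \<in> space X" for x
  proof -
    have "c = emp N (\<zeta> 0) T / emp N (\<zeta> 0) S" using SL TL Lp by simp
    also have "\<dots> = (\<Sum>i\<in>{..<N}. S (\<zeta> 0 i) * (T (\<zeta> 0 i) / S (\<zeta> 0 i))) / (\<Sum>i\<in>{..<N}. S (\<zeta> 0 i))"
    proof -
      have "(\<Sum>i\<in>{..<N}. S (\<zeta> 0 i) * (T (\<zeta> 0 i) / S (\<zeta> 0 i))) = (\<Sum>i\<in>{..<N}. T (\<zeta> 0 i))"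
      proof (intro sum.cong refl)
        fix i assume "i \<in> {..<N}"
        then have "S (\<zeta> 0 i) > 0" using Spos zsp by auto
        then show "S (\<zeta> 0 i) * (T (\<zeta> 0 i) / S (\<zeta> 0 i)) = T (\<zeta> 0 i)" by simp
      qed
      then show ?thesis using Nn by (simp add: emp_def)
    qed
    finally have ceq: "c = \<dots>" .
    show ?thesis unfolding ceq
      by (rule avg_bound) (use N_ge Spos zsp ctr x in \<open>auto simp: lessThan_empty_iff\<close>)
  qed
  have pw: "\<bar>T x - S x * c\<bar> \<le> S x * B" if x: "x \<in> space X" for x
  proof -
    have "T x - S x * c = S x * (T x / S x - c)" using Spos[OF x] by (simp add: field_simps)
    then show ?thesis using rc[OF x] Spos[OF x] by (simp add: abs_mult)
  qed
  define g where "g = QNpk G q N \<zeta> 1 n' (\<lambda>_. 1)"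
  have Sg: "S = QN G q N \<zeta> (Suc 0) g" unfolding S_def g_def n by simp
  have gpos: "\<forall>j<N. g (\<zeta> (Suc 0) j) \<ge> 0" unfolding g_def using Q1_pos zsp by (auto intro: less_imp_le)
  have Srat: "x \<in> space X \<Longrightarrow> x2 \<in> space X \<Longrightarrow> (em / ep) * S x2 \<le> S x" for x x2
    unfolding Sg by (rule QN_ratio[OF _ _ gpos])
  have SLs: "(\<Sum>i<N. S (\<zeta> 0 i)) = L * real N" using SL Nn by (simp add: emp_def field_simps)
  have Sub: "S x \<le> (ep / em) * L" if x: "x \<in> space X" for x
  proof -
    have "(\<Sum>i<N. (em / ep) * S x) \<le> (\<Sum>i<N. S (\<zeta> 0 i))" using Srat x zsp by (intro sum_mono) auto
    then have "(em / ep) * S x * real N \<le> L * real N" using SLs by (simp add: mult.commute)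
    then have "(em / ep) * S x \<le> L" using Nn by (rule mult_right_le_imp_le)
    then show ?thesis using em_pos ep by (simp add: field_simps)
  qed
  have Slb: "(em / ep) * L \<le> S x" if x: "x \<in> space X" for x
  proof -
    have "(\<Sum>i<N. (em / ep) * S (\<zeta> 0 i)) \<le> (\<Sum>i<N. S x)" using Srat x zsp by (intro sum_mono) auto
    moreover have "(\<Sum>i<N. (em / ep) * S (\<zeta> 0 i)) = (em / ep) * L * real N"
      by (simp only: sum_distrib_left[symmetric] SLs mult.assoc)
    ultimately have "(em / ep) * L * real N \<le> S x * real N" by (simp add: mult.commute)
    then show ?thesis using Nn by (rule mult_right_le_imp_le)
  qed
  have iS: "integrable \<mu>' S" unfolding Sg by (rule QN_integrable[OF q_meas mu_prob mu_sets])
  have iT: "integrable \<mu>' T" unfolding T_def n QNpk.simps by (rule QN_integrable[OF q_meas mu_prob mu_sets])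
  define IS where "IS = (\<integral>x. S x \<partial>\<mu>')"
  define IT where "IT = (\<integral>x. T x \<partial>\<mu>')"
  have ISu: "IS \<le> (ep / em) * L"
  proof -
    have "IS \<le> (\<integral>x. (ep / em) * L \<partial>\<mu>')" unfolding IS_def
      by (rule integral_mono[OF iS]) (use Sub sp in auto)
    then show ?thesis by (simp add: mu.prob_space)
  qed
  have ISl: "(em / ep) * L \<le> IS"
  proof -
    have "(\<integral>x. (em / ep) * L \<partial>\<mu>') \<le> IS" unfolding IS_def
      by (rule integral_mono[OF _ iS]) (use Slb sp in auto)
    then show ?thesis by (simp add: mu.prob_space)
  qed
  have ISp: "IS > 0" using ISl em_pos ep Lp by (smt (verit) divide_pos_pos mult_pos_pos)
  have main: "\<bar>IT - IS * c\<bar> \<le> B * IS"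
  proof -
    have iD: "integrable \<mu>' (\<lambda>x. T x - S x * c)" using iT iS by auto
    have iB: "integrable \<mu>' (\<lambda>x. S x * B)" using iS by auto
    have eq: "IT - IS * c = (\<integral>x. T x - S x * c \<partial>\<mu>')" unfolding IT_def IS_def using iT iS by simp
    define J where "J = (\<integral>x. T x - S x * c \<partial>\<mu>')"
    have SB: "(\<integral>x. S x * B \<partial>\<mu>') = B * IS" unfolding IS_def by simp
    have "J \<le> (\<integral>x. S x * B \<partial>\<mu>')" unfolding J_def
      by (rule integral_mono[OF iD iB]) (use pw sp in \<open>auto simp: abs_le_iff\<close>)
    then have J1: "J \<le> B * IS" using SB by linarith
    have "(\<integral>x. - (T x - S x * c) \<partial>\<mu>') \<le> (\<integral>x. S x * B \<partial>\<mu>')"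
      by (rule integral_mono[OF _ iB]) (use pw sp iT iS in \<open>auto simp: abs_le_iff\<close>)
    moreover have "(\<integral>x. - (T x - S x * c) \<partial>\<mu>') = - J" unfolding J_def by (rule integral_minus)
    ultimately have J2: "- J \<le> B * IS" using SB by linarith
    show ?thesis unfolding eq J_def[symmetric] using J1 J2 by (simp add: abs_le_iff)
  qed
  have QT: "QNpn G q N \<zeta> 0 n \<phi> = T" unfolding QNpn_def T_def by simp
  have QS: "QNpn G q N \<zeta> 0 n (\<lambda>_. 1) = S" unfolding QNpn_def S_def by simp
  have hh: "(\<integral>x. hN G q N \<zeta> 0 n x \<partial>\<mu>') = IS / L"
  proof -
    have "hN G q N \<zeta> 0 n = (\<lambda>x. S x / L)" using n_ge SL by (auto simp: hN_def QS)
    then show ?thesis unfolding IS_def by simp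
  qed
  have first: "\<bar>inverse L * IT - IS / L * c\<bar> \<le> B * (ep / em)"
  proof -
    have "\<bar>inverse L * IT - IS / L * c\<bar> = \<bar>IT - IS * c\<bar> / L" using Lp
      by (simp add: field_simps abs_divide)
    also have "\<dots> \<le> B * IS / L" using main Lp by (simp add: divide_right_mono)
    also have "\<dots> \<le> B * ((ep / em) * L) / L" using ISu B0 Lp by (intro divide_right_mono mult_left_mono) auto
    also have "\<dots> = B * (ep / em)" using Lp by simp
    finally show ?thesis .
  qed
  have second: "\<bar>IT / IS - c\<bar> \<le> B * (ep / em)\<^sup>2"
  proof -
    have "\<bar>IT / IS - c\<bar> = \<bar>IT - IS * c\<bar> / IS" using ISp by (simp add: field_simps abs_divide)
    also have "\<dots> \<le> B" using main ISp by (simp add: divide_le_eq)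
    also have "\<dots> \<le> B * (ep / em)\<^sup>2"
    proof -
      have "1 \<le> ep / em" using em_pos emep by simp
      then have "1 \<le> (ep / em)\<^sup>2" by (rule one_le_power)
      then show ?thesis using B0 mult_left_mono[of 1 "(ep / em)\<^sup>2" B] by simp
    qed
    finally show ?thesis .
  qed
  show ?thesis using first second
    unfolding QT QS hh IS_def[symmetric] IT_def[symmetric] L_def B_def \<rho>_def \<Phi>_def c_def
    by (simp add: mult.assoc)
qed
end
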